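(* Let $\omega$ be a weight on a countable group $G$, and let $\mu$ be a probability measure on $G$ with $\mu\in\ell^{q_0}(G,\omega_{p_0})$, where $1<q_0\le p_0<\infty$ and $\frac1{p_0}+\frac1{q_0}=1$. (i) The map $[p_0,\infty)\to\mathbb{R}$, $p\mapsto-p\log\|\mu\|_{q,\omega_p}$, where $\frac1p+\frac1q=1$, is increasing. (ii) If in addition $\mu$ has finite Shannon entropy and finite $\log\omega$-moment, then \[ H_\omega(G,\mu)=\lim_{p\to\infty}-p\log\|\mu\|_{q,\omega_p},\qquad\frac1p+\frac1q=1. \]
   Context: A weight on $G$ is $\omega:G\to[a,\infty)$, $a>0$, with $\omega(st)\le C\omega(s)\omega(t)$ for some $C>0$. For $p\ge1$, $\omega_p=\omega^{1/p}$. For a weight $\sigma$ and $1\le q<\infty$, $\ell^q(G,\sigma)=\{f:\|f\|_{q,\sigma}<\infty\}$ with $\|f\|_{q,\sigma}=\big(\sum_s|f(s)|^q\sigma(s)^q\big)^{1/q}$. Shannon entropy $H(G,\mu)=-\sum_s\mu(s)\log\mu(s)$; finite $\log\omega$-moment means $\sum_s\mu(s)\log\omega(s)<\infty$. The weighted Shannon entropy is $H_\omega(G,\mu)=-\sum_s\mu(s)\log[\mu(s)\omega(s)]$. *)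

theory Defs
  imports "HOL-Analysis.Analysis" "HOL-Algebra.Group"
begin

definition is_weight :: "('g, 'b) monoid_scheme \<Rightarrow> ('g \<Rightarrow> real) \<Rightarrow> bool" where
  "is_weight G \<omega> \<longleftrightarrow>
     (\<exists>a>0. \<forall>s\<in>carrier G. a \<le> \<omega> s) \<and>
     (\<exists>C>0. \<forall>s\<in>carrier G. \<forall>t\<in>carrier G. \<omega> (s \<otimes>\<^bsub>G\<^esub> t) \<le> C * \<omega> s * \<omega> t)"

definition weight_root :: "('g \<Rightarrow> real) \<Rightarrow> real \<Rightarrow> 'g \<Rightarrow> real" where
  "weight_root \<omega> p = (\<lambda>s. \<omega> s powr (1 / p))"

definition in_lq :: "('g, 'b) monoid_scheme \<Rightarrow> real \<Rightarrow> ('g \<Rightarrow> real) \<Rightarrow> ('g \<Rightarrow> real) \<Rightarrow> bool" where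
  "in_lq G q \<sigma> f \<longleftrightarrow> (\<lambda>s. \<bar>f s\<bar> powr q * \<sigma> s powr q) summable_on carrier G"

definition wnorm :: "('g, 'b) monoid_scheme \<Rightarrow> real \<Rightarrow> ('g \<Rightarrow> real) \<Rightarrow> ('g \<Rightarrow> real) \<Rightarrow> real" where
  "wnorm G q \<sigma> f = (\<Sum>\<^sub>\<infinity>s\<in>carrier G. \<bar>f s\<bar> powr q * \<sigma> s powr q) powr (1 / q)"

definition conj_exp :: "real \<Rightarrow> real" where
  "conj_exp p = p / (p - 1)"

definition is_prob :: "('g, 'b) monoid_scheme \<Rightarrow> ('g \<Rightarrow> real) \<Rightarrow> bool" where
  "is_prob G \<mu> \<longleftrightarrow> (\<forall>s\<in>carrier G. 0 \<le> \<mu> s) \<and> (\<mu> has_sum 1) (carrier G)"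

text \<open>Finite Shannon entropy (convention 0 log 0 = 0, which matches ln 0 = 0).\<close>
definition finite_entropy :: "('g, 'b) monoid_scheme \<Rightarrow> ('g \<Rightarrow> real) \<Rightarrow> bool" where
  "finite_entropy G \<mu> \<longleftrightarrow> (\<lambda>s. - \<mu> s * ln (\<mu> s)) summable_on carrier G"

definition finite_log_moment :: "('g, 'b) monoid_scheme \<Rightarrow> ('g \<Rightarrow> real) \<Rightarrow> ('g \<Rightarrow> real) \<Rightarrow> bool" where
  "finite_log_moment G \<omega> \<mu> \<longleftrightarrow> (\<lambda>s. \<mu> s * ln (\<omega> s)) summable_on carrier G"

definition weighted_entropy :: "('g, 'b) monoid_scheme \<Rightarrow> ('g \<Rightarrow> real) \<Rightarrow> ('g \<Rightarrow> real) \<Rightarrow> real" where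
  "weighted_entropy G \<omega> \<mu> = - (\<Sum>\<^sub>\<infinity>s\<in>carrier G. \<mu> s * ln (\<mu> s * \<omega> s))"

end

theory Submission
  imports Defs
begin


lemma pow_le_lin:
  fixes z l :: real
  assumes "0 \<le> z" "0 < l" "l \<le> 1"
  shows "z powr l \<le> 1 + l * (z - 1)"
proof (cases "z = 0")
  case True then show ?thesis using assms by simp
next
  case False
  then have "z powr l * 1 powr (1 - l) \<le> l * z + (1 - l) * 1"
    using assms by (intro Youngs_inequality_0) auto
  then show ?thesis by (simp add: algebra_simps)
qed

lemma powr_quot_mono:
  fixes Y r r1 :: real
  assumes "0 \<le> Y" "0 < r" "r \<le> r1"
  shows "(Y powr r - 1) / r \<le> (Y powr r1 - 1) / r1"
proof -
  have r1: "0 < r1" using assms by linarith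
  have "Y powr r = (Y powr r1) powr (r / r1)"
    using assms r1 by (simp add: powr_powr)
  also have "\<dots> \<le> 1 + (r / r1) * (Y powr r1 - 1)"
    using assms r1 by (intro pow_le_lin) auto
  finally have "Y powr r - 1 \<le> r * ((Y powr r1 - 1) / r1)" by simp
  then show ?thesis using assms by (simp add: pos_divide_le_eq mult.commute)
qed

lemma powr_quot_ge_ln:
  fixes Y r :: real
  assumes "0 < Y" "0 < r"
  shows "ln Y \<le> (Y powr r - 1) / r"
proof -
  have "1 + r * ln Y \<le> exp (r * ln Y)" by (rule exp_ge_add_one_self)
  moreover have "Y powr r = exp (r * ln Y)" using assms by (simp add: powr_def)
  ultimately have "r * ln Y \<le> Y powr r - 1" by linarith
  then show ?thesis using assms by (simp add: pos_le_divide_eq mult.commute)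
qed

lemma powr_quot_tendsto:
  fixes Y :: real
  assumes "0 < Y"
  shows "((\<lambda>r. (Y powr r - 1) / r) \<longlongrightarrow> ln Y) (at_right 0)"
proof -
  have "((\<lambda>r. exp (r * ln Y)) has_field_derivative (exp (0 * ln Y) * ln Y)) (at 0 within {0<..})"
    by (auto intro!: derivative_eq_intros)
  then have "((\<lambda>r. (exp (r * ln Y) - exp (0 * ln Y)) / (r - 0)) \<longlongrightarrow> ln Y) (at_right 0)"
    by (simp add: has_field_derivative_iff)
  then show ?thesis
    by (rule Lim_transform_eventually)
       (use assms in \<open>auto simp: powr_def eventually_at_right_less intro!: eventually_mono[OF eventually_at_right_less]\<close>)
qed


locale wsetup =
  fixes C :: "'g set" and \<mu> \<omega> :: "'g \<Rightarrow> real" and r0 :: real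
  assumes mu_nn: "\<And>s. s \<in> C \<Longrightarrow> 0 \<le> \<mu> s"
    and mu_sum: "(\<mu> has_sum 1) C"
    and om_pos: "\<And>s. s \<in> C \<Longrightarrow> 0 < \<omega> s"
    and r0_pos: "0 < r0"
    and summ0: "(\<lambda>s. \<mu> s * (\<mu> s * \<omega> s) powr r0) summable_on C"
begin

definition E :: "real \<Rightarrow> real" where
  "E r = (\<Sum>\<^sub>\<infinity>s\<in>C. \<mu> s * (\<mu> s * \<omega> s) powr r)"

lemma Y_nn: "s \<in> C \<Longrightarrow> 0 \<le> \<mu> s * \<omega> s"
  using mu_nn om_pos by (simp add: less_imp_le)

lemma mu_summ: "\<mu> summable_on C"
  using mu_sum has_sum_imp_summable by blast

lemma mu_inf: "infsum \<mu> C = 1"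
  using mu_sum by (rule infsumI)

lemma summ_r:
  assumes "0 < r" "r \<le> r0"
  shows "(\<lambda>s. \<mu> s * (\<mu> s * \<omega> s) powr r) summable_on C"
proof (rule summable_on_comparison_test)
  show "(\<lambda>s. \<mu> s + \<mu> s * (\<mu> s * \<omega> s) powr r0) summable_on C"
    using mu_summ summ0 by (rule summable_on_add)
  fix s assume s: "s \<in> C"
  show "0 \<le> \<mu> s * (\<mu> s * \<omega> s) powr r" using mu_nn[OF s] by simp
  have "(\<mu> s * \<omega> s) powr r = ((\<mu> s * \<omega> s) powr r0) powr (r / r0)"
    using r0_pos by (simp add: powr_powr)
  also have "\<dots> \<le> 1 + (r / r0) * ((\<mu> s * \<omega> s) powr r0 - 1)"
    using assms r0_pos by (intro pow_le_lin) auto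
  also have "\<dots> \<le> 1 + (\<mu> s * \<omega> s) powr r0"
  proof -
    have "(r / r0) * ((\<mu> s * \<omega> s) powr r0 - 1) \<le> (r / r0) * (\<mu> s * \<omega> s) powr r0"
      using assms r0_pos by (intro mult_left_mono) auto
    also have "\<dots> \<le> (\<mu> s * \<omega> s) powr r0"
      using assms r0_pos by (intro mult_left_le_one_le) auto
    finally show ?thesis by (simp add: algebra_simps)
  qed
  finally show "\<mu> s * (\<mu> s * \<omega> s) powr r \<le> \<mu> s + \<mu> s * (\<mu> s * \<omega> s) powr r0"
    using mu_nn[OF s] by (metis distrib_left mult.right_neutral mult_left_mono)
qed

lemma E_pos:
  assumes "0 < r" "r \<le> r0"
  shows "0 < E r"
proof -
  obtain s where s: "s \<in> C" "0 < \<mu> s"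
  proof (rule ccontr)
    assume "\<not> thesis"
    then have "\<And>s. s \<in> C \<Longrightarrow> \<mu> s = 0" using mu_nn that by force
    then have "infsum \<mu> C = 0" by (simp add: infsum_0)
    then show False using mu_inf by simp
  qed
  have "0 < \<mu> s * (\<mu> s * \<omega> s) powr r"
    using s om_pos[OF s(1)] by simp
  also have "\<dots> = (\<Sum>\<^sub>\<infinity>t\<in>{s}. \<mu> t * (\<mu> t * \<omega> t) powr r)" by simp
  also have "\<dots> \<le> E r" unfolding E_def
    using s mu_nn summ_r[OF assms]
    by (intro infsum_mono_neutral) auto
  finally show ?thesis .
qed

lemma E_le:
  assumes "0 < r2" "r2 \<le> r1" "r1 \<le> r0"
  shows "E r2 \<le> E r1 powr (r2 / r1)"
proof -
  have r1: "0 < r1" using assms by linarith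
  define A where "A = E r1"
  have A: "0 < A" unfolding A_def using E_pos r1 assms by auto
  define l where "l = r2 / r1"
  have l: "0 < l" "l \<le> 1" using assms r1 by (auto simp: l_def)
  define c1 where "c1 = A powr l * (1 - l)"
  define c2 where "c2 = A powr l * l / A"
  have pt: "\<mu> s * (\<mu> s * \<omega> s) powr r2 \<le> c1 * \<mu> s + c2 * (\<mu> s * (\<mu> s * \<omega> s) powr r1)"
    if s: "s \<in> C" for s
  proof -
    have "(\<mu> s * \<omega> s) powr r2 = A powr l * (((\<mu> s * \<omega> s) powr r1) / A) powr l"
      using A r1 Y_nn[OF s] by (simp add: l_def powr_powr powr_divide)
    also have "\<dots> \<le> A powr l * (1 + l * (((\<mu> s * \<omega> s) powr r1) / A - 1))"
      using A l by (intro mult_left_mono pow_le_lin) auto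
    also have "\<dots> = c1 + c2 * (\<mu> s * \<omega> s) powr r1"
      using A by (simp add: c1_def c2_def field_simps)
    finally show ?thesis using mu_nn[OF s]
      by (metis (no_types, lifting) distrib_left mult.commute mult.left_commute mult_left_mono)
  qed
  have "E r2 \<le> (\<Sum>\<^sub>\<infinity>s\<in>C. c1 * \<mu> s + c2 * (\<mu> s * (\<mu> s * \<omega> s) powr r1))"
    unfolding E_def using pt assms summ_r r1
    by (intro infsum_mono summable_on_add summable_on_cmult_right mu_summ) auto
  also have "\<dots> = c1 * infsum \<mu> C + c2 * A"
    using summ_r[OF r1 assms(3)] mu_summ
    by (simp add: infsum_add summable_on_cmult_right infsum_cmult_right A_def E_def)
  also have "\<dots> = A powr l" using A mu_inf by (simp add: c1_def c2_def field_simps)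
  finally show ?thesis by (simp add: A_def l_def)
qed

end

context wsetup begin

definition d :: "real \<Rightarrow> 'g \<Rightarrow> real" where
  "d r s = (1 / r) * (\<mu> s * (\<mu> s * \<omega> s) powr r) + (- (1 / r)) * \<mu> s + - (\<mu> s * ln (\<mu> s * \<omega> s))"

lemma d_eq: "r \<noteq> 0 \<Longrightarrow> d r s = \<mu> s * (((\<mu> s * \<omega> s) powr r - 1) / r - ln (\<mu> s * \<omega> s))"
  by (simp add: d_def field_simps)

lemma d_nn: assumes "s \<in> C" "0 < r" shows "0 \<le> d r s"
proof (cases "\<mu> s = 0")
  case True then show ?thesis by (simp add: d_def)
next
  case False
  then have "0 < \<mu> s * \<omega> s" using mu_nn[OF assms(1)] om_pos[OF assms(1)] by simp
  then have "ln (\<mu> s * \<omega> s) \<le> ((\<mu> s * \<omega> s) powr r - 1) / r"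
    using assms by (intro powr_quot_ge_ln) auto
  then show ?thesis using assms mu_nn[OF assms(1)] by (simp add: d_eq)
qed

lemma d_le: assumes "s \<in> C" "0 < r" "r \<le> r0" shows "d r s \<le> d r0 s"
proof -
  have "((\<mu> s * \<omega> s) powr r - 1) / r \<le> ((\<mu> s * \<omega> s) powr r0 - 1) / r0"
    using assms Y_nn by (intro powr_quot_mono) auto
  then show ?thesis using assms r0_pos mu_nn[OF assms(1)]
    by (simp add: d_eq mult_left_mono)
qed

lemma d_tendsto: assumes "s \<in> C" shows "((\<lambda>r. d r s) \<longlongrightarrow> 0) (at_right 0)"
proof (cases "\<mu> s = 0")
  case True then show ?thesis by (simp add: d_def)
next
  case False
  then have Y: "0 < \<mu> s * \<omega> s" using mu_nn[OF assms(1)] om_pos[OF assms(1)] by simp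
  have "((\<lambda>r. \<mu> s * (((\<mu> s * \<omega> s) powr r - 1) / r - ln (\<mu> s * \<omega> s))) \<longlongrightarrow>
        \<mu> s * (ln (\<mu> s * \<omega> s) - ln (\<mu> s * \<omega> s))) (at_right 0)"
    by (intro tendsto_intros powr_quot_tendsto Y)
  then have "((\<lambda>r. \<mu> s * (((\<mu> s * \<omega> s) powr r - 1) / r - ln (\<mu> s * \<omega> s))) \<longlongrightarrow> 0) (at_right 0)"
    by simp
  then show ?thesis
    by (rule Lim_transform_eventually)
       (auto simp: d_eq intro!: eventually_mono[OF eventually_at_right_less])
qed

context
  fixes L :: real
  assumes Lsum: "(\<lambda>s. \<mu> s * ln (\<mu> s * \<omega> s)) summable_on C"
  and L_def: "L = (\<Sum>\<^sub>\<infinity>s\<in>C. \<mu> s * ln (\<mu> s * \<omega> s))"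
begin

lemma d_summ: assumes "0 < r" "r \<le> r0" shows "d r summable_on C"
  unfolding d_def[abs_def]
  using summ_r[OF assms] mu_summ Lsum
  by (intro summable_on_add summable_on_cmult_right iffD2[OF summable_on_uminus])

lemma d_inf: assumes "0 < r" "r \<le> r0" shows "infsum (d r) C = (E r - 1) / r - L"
proof -
  let ?a = "\<lambda>s. (1 / r) * (\<mu> s * (\<mu> s * \<omega> s) powr r)"
  let ?b = "\<lambda>s. (- (1 / r)) * \<mu> s"
  let ?c = "\<lambda>s. - (\<mu> s * ln (\<mu> s * \<omega> s))"
  have sa: "?a summable_on C" using summ_r[OF assms] by (rule summable_on_cmult_right)
  have sb: "?b summable_on C" using mu_summ by (rule summable_on_cmult_right)
  have sc: "?c summable_on C" using Lsum by (simp add: summable_on_uminus)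
  have "infsum (d r) C = infsum (\<lambda>s. ?a s + ?b s) C + infsum ?c C"
    unfolding d_def[abs_def] by (rule infsum_add[OF summable_on_add[OF sa sb] sc])
  also have "\<dots> = infsum ?a C + infsum ?b C + infsum ?c C"
    by (simp only: infsum_add[OF sa sb])
  also have "\<dots> = (1 / r) * E r + (- (1 / r)) * infsum \<mu> C + - L"
    unfolding E_def L_def infsum_uminus
    by (simp only: infsum_cmult_right[OF summ_r[OF assms]] infsum_cmult_right[OF mu_summ])
  finally have "infsum (d r) C = (1 / r) * E r + (- (1 / r)) * infsum \<mu> C + - L" .
  then show ?thesis using mu_inf by (simp add: diff_divide_distrib algebra_simps)
qed

lemma D_tendsto: "((\<lambda>r. infsum (d r) C) \<longlongrightarrow> 0) (at_right 0)"
proof (rule tendstoI)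
  fix e :: real assume e: "0 < e"
  have h: "d r0 summable_on C" using d_summ r0_pos by simp
  have "\<forall>\<^sub>F F in finite_subsets_at_top C. dist (sum (d r0) F) (infsum (d r0) C) < e / 2"
    using infsum_tendsto[OF h] by (rule tendstoD) (use e in simp)
  then obtain F where F: "finite F" "F \<subseteq> C"
    and Fb: "dist (sum (d r0) F) (infsum (d r0) C) < e / 2"
    unfolding eventually_finite_subsets_at_top by blast
  have "((\<lambda>r. \<Sum>s\<in>F. d r s) \<longlongrightarrow> (\<Sum>s\<in>F. 0)) (at_right 0)"
    using F by (intro tendsto_sum d_tendsto) auto
  then have ev1: "\<forall>\<^sub>F r in at_right 0. (\<Sum>s\<in>F. d r s) < e / 2"
    by (rule order_tendstoD(2)) (use e in simp)
  have ev2: "\<forall>\<^sub>F r in at_right 0. r \<in> {0<..<r0}"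
    using r0_pos by (rule eventually_at_right_real)
  show "\<forall>\<^sub>F r in at_right 0. dist (infsum (d r) C) 0 < e"
    using ev1 ev2
  proof eventually_elim
    case (elim r)
    then have r: "0 < r" "r \<le> r0" by auto
    have CF: "C = F \<union> (C - F)" "F \<inter> (C - F) = {}" using F by auto
    have s1: "d r summable_on (C - F)" using d_summ[OF r] by (rule summable_on_subset) auto
    have s0: "d r0 summable_on (C - F)" using h by (rule summable_on_subset) auto
    have "infsum (d r) C = sum (d r) F + infsum (d r) (C - F)"
      using infsum_Un_disjoint[OF _ s1 CF(2)] F CF(1) by (metis infsum_finite summable_on_finite)
    moreover have "infsum (d r0) C = sum (d r0) F + infsum (d r0) (C - F)"
      using infsum_Un_disjoint[OF _ s0 CF(2)] F CF(1) by (metis infsum_finite summable_on_finite)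
    moreover have "infsum (d r) (C - F) \<le> infsum (d r0) (C - F)"
      using s1 s0 d_le r by (intro infsum_mono) auto
    moreover have "0 \<le> infsum (d r) C" using d_nn r by (intro infsum_nonneg) auto
    moreover have "0 \<le> sum (d r0) F" using d_nn r0_pos F by (intro sum_nonneg) auto
    ultimately show ?case using elim Fb by (simp add: dist_real_def)
  qed
qed

lemma m_tendsto: "((\<lambda>r. (E r - 1) / r) \<longlongrightarrow> L) (at_right 0)"
proof -
  have "((\<lambda>r. infsum (d r) C + L) \<longlongrightarrow> 0 + L) (at_right 0)"
    by (intro tendsto_intros D_tendsto)
  then have "((\<lambda>r. infsum (d r) C + L) \<longlongrightarrow> L) (at_right 0)" by simp
  then show ?thesis
    by (rule Lim_transform_eventually)
       (use r0_pos in \<open>auto simp: d_inf intro!: eventually_mono[OF eventually_at_right_real[of 0 r0]]\<close>)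
qed

lemma g_tendsto: "((\<lambda>r. ln (E r) / r) \<longlongrightarrow> L) (at_right 0)"
proof -
  have m: "((\<lambda>r. (E r - 1) / r) \<longlongrightarrow> L) (at_right 0)" by (rule m_tendsto)
  have rt: "((\<lambda>r::real. r) \<longlongrightarrow> 0) (at_right 0)" by (rule tendsto_ident_at)
  have E1: "((\<lambda>r. 1 + r * ((E r - 1) / r)) \<longlongrightarrow> 1 + 0 * L) (at_right 0)"
    by (intro tendsto_intros m rt)
  have "((\<lambda>r. ((E r - 1) / r) / (1 + r * ((E r - 1) / r))) \<longlongrightarrow> L / (1 + 0 * L)) (at_right 0)"
    by (intro tendsto_intros m E1) simp
  then have lo: "((\<lambda>r. ((E r - 1) / r) / (1 + r * ((E r - 1) / r))) \<longlongrightarrow> L) (at_right 0)" by simp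
  have ev: "\<forall>\<^sub>F r in at_right 0. r \<in> {0<..<r0}"
    using r0_pos by (rule eventually_at_right_real)
  show ?thesis
  proof (rule tendsto_sandwich[OF _ _ lo m])
    show "\<forall>\<^sub>F r in at_right 0. ((E r - 1) / r) / (1 + r * ((E r - 1) / r)) \<le> ln (E r) / r"
      using ev
    proof eventually_elim
      case (elim r)
      then have r: "0 < r" "r \<le> r0" by auto
      have Ep: "0 < E r" using E_pos[OF r] .
      have "ln (1 / E r) \<le> 1 / E r - 1" using Ep by (intro ln_le_minus_one) simp
      then have "(E r - 1) / E r \<le> ln (E r)" using Ep by (simp add: ln_div field_simps)
      then have "((E r - 1) / E r) / r \<le> ln (E r) / r" by (rule divide_right_mono) (use r in simp)
      moreover have "((E r - 1) / r) / (1 + r * ((E r - 1) / r)) = ((E r - 1) / E r) / r"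
        using r by simp
      ultimately show ?case by (metis)
    qed
    show "\<forall>\<^sub>F r in at_right 0. ln (E r) / r \<le> (E r - 1) / r"
      using ev
    proof eventually_elim
      case (elim r)
      then have r: "0 < r" "r \<le> r0" by auto
      have "ln (E r) \<le> E r - 1" using E_pos[OF r] by (rule ln_le_minus_one)
      then show ?case using r by (simp add: divide_right_mono)
    qed
  qed
qed

end
end
lemma term_eq:
  fixes p m w :: real
  assumes "1 < p" "0 \<le> m" "0 < w"
  shows "\<bar>m\<bar> powr conj_exp p * weight_root (\<lambda>_. w) p () powr conj_exp p
         = m * (m * w) powr (1 / (p - 1))"
proof (cases "m = 0")
  case True
  have "conj_exp p \<noteq> 0" using assms by (simp add: conj_exp_def)
  then show ?thesis using True by simp
next
  case False
  then have m: "0 < m" using assms by simp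
  have q: "conj_exp p = 1 + 1 / (p - 1)" using assms by (simp add: conj_exp_def field_simps)
  have q2: "1 / p * conj_exp p = 1 / (p - 1)" using assms by (simp add: conj_exp_def field_simps)
  have q3: "conj_exp p / p = 1 / (p - 1)" using assms by (simp add: conj_exp_def field_simps)
  have "\<bar>m\<bar> powr conj_exp p = m * m powr (1 / (p - 1))"
    using m by (simp add: q powr_add)
  moreover have "weight_root (\<lambda>_. w) p () powr conj_exp p = w powr (1 / (p - 1))"
    using assms by (simp add: weight_root_def powr_powr q2 q3)
  ultimately show ?thesis using m assms by (simp add: powr_mult)
qed

lemma term_eq':
  fixes p :: real
  assumes "1 < p" "0 \<le> \<mu> s" "0 < \<omega> s"
  shows "\<bar>\<mu> s\<bar> powr conj_exp p * weight_root \<omega> p s powr conj_exp p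
         = \<mu> s * (\<mu> s * \<omega> s) powr (1 / (p - 1))"
  using term_eq[OF assms] by (simp add: weight_root_def)

theorem theorem4p4:
  fixes G :: "('g, 'b) monoid_scheme" and \<omega> \<mu> :: "'g \<Rightarrow> real" and p0 q0 :: real
  assumes "group G"
    and "countable (carrier G)"
    and "is_weight G \<omega>"
    and "is_prob G \<mu>"
    and "1 < q0" and "q0 \<le> p0" and "1 / p0 + 1 / q0 = 1"
    and "in_lq G q0 (weight_root \<omega> p0) \<mu>"
  shows "mono_on {p0..} (\<lambda>p. - p * ln (wnorm G (conj_exp p) (weight_root \<omega> p) \<mu>)) \<and>
         (finite_entropy G \<mu> \<longrightarrow> finite_log_moment G \<omega> \<mu> \<longrightarrow>
         ((\<lambda>p. - p * ln (wnorm G (conj_exp p) (weight_root \<omega> p) \<mu>))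
            \<longlongrightarrow> weighted_entropy G \<omega> \<mu>) at_top)"
proof -
  define C where "C = carrier G"
  obtain a where a: "0 < a" "\<And>s. s \<in> C \<Longrightarrow> a \<le> \<omega> s"
    using assms(3) unfolding is_weight_def C_def by blast
  have om: "\<And>s. s \<in> C \<Longrightarrow> 0 < \<omega> s" using a by (meson less_le_trans)
  have mnn: "\<And>s. s \<in> C \<Longrightarrow> 0 \<le> \<mu> s" and msum: "(\<mu> has_sum 1) C"
    using assms(4) unfolding is_prob_def C_def by auto
  have p0: "1 < p0" using assms(5,6) by linarith
  have q0: "q0 = conj_exp p0"
    using assms(5,7) p0 by (simp add: conj_exp_def field_simps)
  define r0 where "r0 = 1 / (p0 - 1)"
  have r0: "0 < r0" using p0 by (simp add: r0_def)
  have s0: "(\<lambda>s. \<mu> s * (\<mu> s * \<omega> s) powr r0) summable_on C"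
  proof -
    have "(\<lambda>s. \<bar>\<mu> s\<bar> powr q0 * weight_root \<omega> p0 s powr q0) summable_on C"
      using assms(8) unfolding in_lq_def C_def .
    then show ?thesis unfolding q0 r0_def
    proof (rule summable_on_cong[THEN iffD1, rotated])
      fix s assume s: "s \<in> C"
      show "\<bar>\<mu> s\<bar> powr conj_exp p0 * weight_root \<omega> p0 s powr conj_exp p0
         = \<mu> s * (\<mu> s * \<omega> s) powr (1 / (p0 - 1))"
        by (rule term_eq'[where \<mu>=\<mu> and \<omega>=\<omega> and s=s, OF p0 mnn[OF s] om[OF s]])
    qed
  qed
  interpret W: wsetup C \<mu> \<omega> r0
    using mnn msum om r0 s0 by unfold_locales auto
  define F where "F = (\<lambda>p. - p * ln (wnorm G (conj_exp p) (weight_root \<omega> p) \<mu>))"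
  have Feq: "F p = - (ln (W.E (1 / (p - 1))) / (1 / (p - 1)))" if p: "p0 \<le> p" for p
  proof -
    have p1: "1 < p" using p p0 by linarith
    have rr: "0 < 1 / (p - 1)" "1 / (p - 1) \<le> r0"
      using p p1 p0 by (auto simp: r0_def divide_simps)
    have "wnorm G (conj_exp p) (weight_root \<omega> p) \<mu> = W.E (1 / (p - 1)) powr (1 / conj_exp p)"
      unfolding wnorm_def W.E_def C_def[symmetric]
      by (rule arg_cong[where f = "\<lambda>x. x powr _"], rule infsum_cong)
         (rule term_eq'[where \<mu>=\<mu> and \<omega>=\<omega>, OF p1 mnn om], auto)
    then have "F p = - p * ((1 / conj_exp p) * ln (W.E (1 / (p - 1))))"
      unfolding F_def using W.E_pos[OF rr] by (simp add: ln_powr)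
    moreover have "1 / conj_exp p = (p - 1) / p" using p1 by (simp add: conj_exp_def)
    ultimately have "F p = - (p * ((p - 1) / p)) * ln (W.E (1 / (p - 1)))" by simp
    also have "p * ((p - 1) / p) = p - 1" using p1 by simp
    finally show ?thesis by (simp add: algebra_simps)
  qed
  have mono: "mono_on {p0..} F"
  proof (rule mono_onI)
    fix x y assume xy: "x \<in> {p0..}" "y \<in> {p0..}" "x \<le> y"
    have x1: "1 < x" "1 < y" using xy p0 by auto
    define r1 where "r1 = 1 / (x - 1)"
    define r2 where "r2 = 1 / (y - 1)"
    have r: "0 < r2" "r2 \<le> r1" "r1 \<le> r0"
      using xy x1 p0 by (auto simp: r1_def r2_def r0_def divide_simps)
    have "W.E r2 \<le> W.E r1 powr (r2 / r1)" by (rule W.E_le[OF r])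
    then have "ln (W.E r2) \<le> ln (W.E r1 powr (r2 / r1))"
      using W.E_pos[of r2] W.E_pos[of r1] r by (subst ln_le_cancel_iff) auto
    also have "\<dots> = (r2 / r1) * ln (W.E r1)" using W.E_pos r by (simp add: ln_powr)
    finally have "ln (W.E r2) / r2 \<le> ln (W.E r1) / r1"
      using r by (simp add: field_simps)
    then show "F x \<le> F y" using Feq xy by (simp add: r1_def r2_def)
  qed
  have lim: "(F \<longlongrightarrow> weighted_entropy G \<omega> \<mu>) at_top"
    if fe: "finite_entropy G \<mu>" and fl: "finite_log_moment G \<omega> \<mu>"
  proof -
    define L where "L = (\<Sum>\<^sub>\<infinity>s\<in>C. \<mu> s * ln (\<mu> s * \<omega> s))"
    have Ls: "(\<lambda>s. \<mu> s * ln (\<mu> s * \<omega> s)) summable_on C"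
    proof -
      have "(\<lambda>s. - (- \<mu> s * ln (\<mu> s)) + \<mu> s * ln (\<omega> s)) summable_on C"
        using fe fl unfolding finite_entropy_def finite_log_moment_def C_def
        by (intro summable_on_add iffD2[OF summable_on_uminus])
      then show ?thesis
      proof (rule summable_on_cong[THEN iffD1, rotated])
        fix s assume s: "s \<in> C"
        show "- (- \<mu> s * ln (\<mu> s)) + \<mu> s * ln (\<omega> s) = \<mu> s * ln (\<mu> s * \<omega> s)"
        proof (cases "\<mu> s = 0")
          case False
          then have "0 < \<mu> s" using mnn[OF s] by simp
          then show ?thesis using om[OF s] by (simp add: ln_mult algebra_simps)
        qed simp
      qed
    qed
    have g: "((\<lambda>r. ln (W.E r) / r) \<longlongrightarrow> L) (at_right 0)"
      by (rule W.g_tendsto[OF Ls L_def])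
    have f0: "LIM p at_top. (-1) + p :> (at_top :: real filter)"
      by (rule filterlim_tendsto_add_at_top[OF tendsto_const filterlim_ident])
    have f1: "filterlim (\<lambda>p::real. p - 1) at_top at_top"
      using f0 by simp
    have f2: "filterlim (\<lambda>p::real. 1 / (p - 1)) (at_right 0) at_top"
      using filterlim_compose[OF filterlim_inverse_at_right_top f1] by (simp add: inverse_eq_divide)
    have "((\<lambda>p. ln (W.E (1 / (p - 1))) / (1 / (p - 1))) \<longlongrightarrow> L) at_top"
      by (rule filterlim_compose[OF g f2])
    then have "((\<lambda>p. - (ln (W.E (1 / (p - 1))) / (1 / (p - 1)))) \<longlongrightarrow> - L) at_top"
      by (rule tendsto_minus)
    moreover have "weighted_entropy G \<omega> \<mu> = - L"
      by (simp add: weighted_entropy_def L_def C_def)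
    ultimately have A: "((\<lambda>p. - (ln (W.E (1 / (p - 1))) / (1 / (p - 1)))) \<longlongrightarrow> weighted_entropy G \<omega> \<mu>) at_top"
      by simp
    show ?thesis
    proof (rule Lim_transform_eventually[OF A])
      show "\<forall>\<^sub>F p in at_top. - (ln (W.E (1 / (p - 1))) / (1 / (p - 1))) = F p"
        using eventually_ge_at_top[of p0] by eventually_elim (simp add: Feq)
    qed
  qed
  show ?thesis using mono lim unfolding F_def by blast
qed

end
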